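(* Let $a\in\mathcal{T}_n\setminus\mathcal{S}_n$ with $\operatorname{rank}(a)=k$ and kernel of type $\lambda$, and let $G\le\mathcal{S}_n$. Then $(a,G)$ is an $\mathcal{S}_n$-pair if and only if $G$ is $k$-homogeneous and $G$ is $\lambda$-homogeneous.
   Context: $\Omega=\{1,\ldots,n\}$, $\mathcal{T}_n$ is the monoid of all maps $\Omega\to\Omega$, $\mathcal{S}_n$ the symmetric group. $\operatorname{rank}(a)=|\Omega a|$; the kernel of $a$ is the partition of $\Omega$ into the classes of $\{(x,y):xa=ya\}$, and its type is the non-increasing list of class sizes. $(a,G)$ is an $\mathcal{S}_n$-pair if $\langle a,G\rangle\setminus G=\langle a,\mathcal{S}_n\rangle\setminus\mathcal{S}_n$ (this notion is defined for non-invertible $a$). $G$ is $k$-homogeneous if transitive on $k$-subsets of $\Omega$. For a partition $\lambda$ of $n$, $G$ is $\lambda$-homogeneous if for any two ordered partitions $(A_1,A_2,\ldots)$, $(B_1,B_2,\ldots)$ of $\Omega$ with $|A_i|=|B_i|=\lambda_i$ there is $g\in G$ mapping the set of parts $\{A_1,A_2,\ldots\}$ onto $\{B_1,B_2,\ldots\}$. *)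

theory Defs
  imports "HOL-Combinatorics.Permutations" "HOL-Library.Multiset"
begin

text \<open>Omega = {1..n}. Maps Omega to Omega are represented as functions nat to nat
  that map {1..n} into itself and are the identity outside {1..n}.\<close>

definition Tn :: "nat \<Rightarrow> (nat \<Rightarrow> nat) set" where
  "Tn n = {f. f ` {1..n} \<subseteq> {1..n} \<and> (\<forall>x. x \<notin> {1..n} \<longrightarrow> f x = x)}"

definition Sn :: "nat \<Rightarrow> (nat \<Rightarrow> nat) set" where
  "Sn n = {p. p permutes {1..n}}"

definition is_subgroup_Sn :: "nat \<Rightarrow> (nat \<Rightarrow> nat) set \<Rightarrow> bool" where
  "is_subgroup_Sn n G \<longleftrightarrow> G \<subseteq> Sn n \<and> id \<in> G \<and>
     (\<forall>g\<in>G. \<forall>h\<in>G. g \<circ> h \<in> G) \<and> (\<forall>g\<in>G. inv g \<in> G)"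

inductive_set gen :: "('a \<Rightarrow> 'a) set \<Rightarrow> ('a \<Rightarrow> 'a) set" for X where
  base: "f \<in> X \<Longrightarrow> f \<in> gen X"
| comp: "f \<in> gen X \<Longrightarrow> g \<in> gen X \<Longrightarrow> f \<circ> g \<in> gen X"

definition Sn_pair :: "nat \<Rightarrow> (nat \<Rightarrow> nat) \<Rightarrow> (nat \<Rightarrow> nat) set \<Rightarrow> bool" where
  "Sn_pair n a G \<longleftrightarrow> gen (insert a G) - G = gen (insert a (Sn n)) - Sn n"

definition rank :: "nat \<Rightarrow> (nat \<Rightarrow> nat) \<Rightarrow> nat" where
  "rank n a = card (a ` {1..n})"

definition kernel_classes :: "nat \<Rightarrow> (nat \<Rightarrow> nat) \<Rightarrow> nat set set" where
  "kernel_classes n a = {{y \<in> {1..n}. a y = a x} | x. x \<in> {1..n}}"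

definition kernel_type :: "nat \<Rightarrow> (nat \<Rightarrow> nat) \<Rightarrow> nat list" where
  "kernel_type n a = rev (sorted_list_of_multiset (image_mset card (mset_set (kernel_classes n a))))"

definition k_homogeneous :: "nat \<Rightarrow> nat \<Rightarrow> (nat \<Rightarrow> nat) set \<Rightarrow> bool" where
  "k_homogeneous n k G \<longleftrightarrow> (\<forall>A B. A \<subseteq> {1..n} \<and> B \<subseteq> {1..n} \<and> card A = k \<and> card B = k
      \<longrightarrow> (\<exists>g\<in>G. g ` A = B))"

definition ordered_partition :: "nat \<Rightarrow> nat list \<Rightarrow> nat set list \<Rightarrow> bool" where
  "ordered_partition n lam As \<longleftrightarrow> length As = length lam \<and>
     (\<forall>i<length As. card (As ! i) = lam ! i \<and> As ! i \<subseteq> {1..n}) \<and>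
     (\<forall>i<length As. \<forall>j<length As. i \<noteq> j \<longrightarrow> As ! i \<inter> As ! j = {}) \<and>
     \<Union>(set As) = {1..n}"

definition lambda_homogeneous :: "nat \<Rightarrow> nat list \<Rightarrow> (nat \<Rightarrow> nat) set \<Rightarrow> bool" where
  "lambda_homogeneous n lam G \<longleftrightarrow> (\<forall>As Bs. ordered_partition n lam As \<and> ordered_partition n lam Bs
      \<longrightarrow> (\<exists>g\<in>G. (\<lambda>A. g ` A) ` set As = set Bs))"

end

theory Submission
  imports Defs
begin

lemma perm_ext:
  assumes "finite S" "bij_betw f A B" "A \<subseteq> S" "B \<subseteq> S"
  shows "\<exists>p. p permutes S \<and> (\<forall>x\<in>A. p x = f x)"
proof -
  have fA: "finite A" "finite B" using assms finite_subset by auto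
  have cAB: "card A = card B" using assms(2) bij_betw_same_card by blast
  have "card (S - A) = card (S - B)"
    by (simp only: card_Diff_subset[OF fA(1) assms(3)] card_Diff_subset[OF fA(2) assms(4)] cAB)
  then obtain h where h: "bij_betw h (S - A) (S - B)"
    using finite_same_card_bij[of "S - A" "S - B"] assms(1) by blast
  have b: "bij_betw (\<lambda>x. if x \<in> A then f x else h x) (A \<union> (S - A)) (B \<union> (S - B))"
    by (rule bij_betw_disjoint_Un[OF assms(2) h]) blast+
  define p where "p x = (if x \<in> S then (if x \<in> A then f x else h x) else x)" for x
  have e: "A \<union> (S - A) = S" "B \<union> (S - B) = S" using assms by auto
  have "bij_betw p S S" 
    using b unfolding e by (rule bij_betw_cong[THEN iffD1, rotated]) (simp add: p_def)
  hence "p permutes S" by (rule bij_imp_permutes) (simp add: p_def)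
  moreover have "\<forall>x\<in>A. p x = f x" using assms by (auto simp: p_def)
  ultimately show ?thesis by blast
qed

definition pdisj :: "'a set list \<Rightarrow> bool" where
  "pdisj Xs \<longleftrightarrow> (\<forall>i<length Xs. \<forall>j<length Xs. i \<noteq> j \<longrightarrow> Xs ! i \<inter> Xs ! j = {})"

lemma pdisj_Cons: "pdisj (A # As) \<Longrightarrow> pdisj As \<and> A \<inter> \<Union>(set As) = {}"
proof -
  assume d: "pdisj (A # As)"
  have "pdisj As" unfolding pdisj_def
  proof (intro allI impI)
    fix i j assume "i < length As" "j < length As" "i \<noteq> j"
    with d[unfolded pdisj_def, rule_format, of "Suc i" "Suc j"] show "As ! i \<inter> As ! j = {}" by simp
  qed
  moreover have "A \<inter> \<Union>(set As) = {}"
  proof (rule ccontr)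
    assume "A \<inter> \<Union>(set As) \<noteq> {}"
    then obtain x j where "x \<in> A" "j < length As" "x \<in> As ! j" by (auto simp: in_set_conv_nth)
    with d[unfolded pdisj_def, rule_format, of 0 "Suc j"] show False by auto
  qed
  ultimately show ?thesis by blast
qed

lemma list_bij:
  "length As = length Bs \<Longrightarrow> (\<forall>i<length As. finite (As!i) \<and> finite (Bs!i) \<and> card (As!i) = card (Bs!i))
   \<Longrightarrow> pdisj As \<Longrightarrow> pdisj Bs \<Longrightarrow>
   \<exists>f. bij_betw f (\<Union>(set As)) (\<Union>(set Bs)) \<and> (\<forall>i<length As. f ` (As!i) = Bs!i)"
proof (induction As Bs rule: list_induct2)
  case Nil
  then show ?case by (auto simp: bij_betw_def)
next
  case (Cons A As B Bs)
  from Cons.prems(1)[rule_format, of 0] have c0: "finite A" "finite B" "card A = card B" by auto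
  have cr: "\<forall>i<length As. finite (As!i) \<and> finite (Bs!i) \<and> card (As!i) = card (Bs!i)"
  proof (intro allI impI)
    fix i assume "i < length As"
    with Cons.prems(1)[rule_format, of "Suc i"] show "finite (As!i) \<and> finite (Bs!i) \<and> card (As!i) = card (Bs!i)" by simp
  qed
  obtain f where f: "bij_betw f (\<Union>(set As)) (\<Union>(set Bs))" "\<forall>i<length As. f ` (As!i) = Bs!i"
    using Cons.IH[OF cr] pdisj_Cons[OF Cons.prems(2)] pdisj_Cons[OF Cons.prems(3)] by blast
  obtain h where h: "bij_betw h A B" using finite_same_card_bij c0 by blast
  have dA: "A \<inter> \<Union>(set As) = {}" and dB: "B \<inter> \<Union>(set Bs) = {}"
    using pdisj_Cons[OF Cons.prems(2)] pdisj_Cons[OF Cons.prems(3)] by auto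
  have b: "bij_betw (\<lambda>x. if x \<in> A then h x else f x) (A \<union> \<Union>(set As)) (B \<union> \<Union>(set Bs))"
    by (rule bij_betw_disjoint_Un[OF h f(1) dA dB])
  have P: "\<forall>i<length (A # As). (\<lambda>x. if x \<in> A then h x else f x) ` ((A#As)!i) = (B#Bs)!i"
  proof (intro allI impI)
    fix i assume i: "i < length (A # As)"
    show "(\<lambda>x. if x \<in> A then h x else f x) ` ((A#As)!i) = (B#Bs)!i"
    proof (cases i)
      case 0
      have "(\<lambda>x. if x \<in> A then h x else f x) ` A = h ` A" by (rule image_cong) auto
      then show ?thesis using h 0 by (simp add: bij_betw_def)
    next
      case (Suc j)
      with i have j: "j < length As" by simp
      hence "As ! j \<inter> A = {}" using dA nth_mem by blast
      hence "(\<lambda>x. if x \<in> A then h x else f x) ` (As!j) = f ` (As!j)" by (intro image_cong) auto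
      then show ?thesis using Suc f(2) j by simp
    qed
  qed
  define F where "F = (\<lambda>x. if x \<in> A then h x else f x)"
  show ?case
  proof (intro exI conjI)
    show "bij_betw F (\<Union>(set (A#As))) (\<Union>(set (B#Bs)))" using b by (simp add: F_def)
    show "\<forall>i<length (A # As). F ` ((A#As)!i) = (B#Bs)!i" using P unfolding F_def .
  qed
qed

lemma Tn_comp: "f \<in> Tn n \<Longrightarrow> g \<in> Tn n \<Longrightarrow> f \<circ> g \<in> Tn n"
  unfolding Tn_def by (auto simp: image_subset_iff)

lemma Tn_in: "f \<in> Tn n \<Longrightarrow> x \<in> {1..n} \<Longrightarrow> f x \<in> {1..n}"
  unfolding Tn_def by blast

lemma Tn_out: "f \<in> Tn n \<Longrightarrow> x \<notin> {1..n} \<Longrightarrow> f x = x"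
  unfolding Tn_def by blast

lemma Sn_Tn: "Sn n \<subseteq> Tn n"
proof
  fix p assume "p \<in> Sn n"
  hence p: "p permutes {1..n}" by (simp add: Sn_def)
  show "p \<in> Tn n" unfolding Tn_def using permutes_image[OF p] permutes_not_in[OF p] by auto
qed

lemma gen_Tn: "f \<in> gen X \<Longrightarrow> X \<subseteq> Tn n \<Longrightarrow> f \<in> Tn n"
  by (induction rule: gen.induct) (auto intro: Tn_comp)

lemma gen_mono: "f \<in> gen X \<Longrightarrow> X \<subseteq> Y \<Longrightarrow> f \<in> gen Y"
  by (induction rule: gen.induct) (auto intro: gen.intros)

lemma pow_gen: "c \<in> gen X \<Longrightarrow> c ^^ (Suc m) \<in> gen X"
  by (induction m) (auto intro: gen.comp)

lemma pow_Tn: "c \<in> Tn n \<Longrightarrow> c ^^ m \<in> Tn n"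
  by (induction m) (auto intro: Tn_comp simp: Tn_def)

lemma finite_Tn: "finite (Tn n)"
proof -
  have inj: "inj_on (\<lambda>f. restrict f {1..n}) (Tn n)"
  proof (rule inj_onI)
    fix f g assume fg: "f \<in> Tn n" "g \<in> Tn n" "restrict f {1..n} = restrict g {1..n}"
    show "f = g"
    proof
      fix x show "f x = g x"
      proof (cases "x \<in> {1..n}")
        case True thus ?thesis using fun_cong[OF fg(3), of x] by simp
      next
        case False thus ?thesis using fg(1,2) by (simp add: Tn_out)
      qed
    qed
  qed
  have sub: "(\<lambda>f. restrict f {1..n}) ` Tn n \<subseteq> {1..n} \<rightarrow>\<^sub>E {1..n}"
  proof
    fix r assume "r \<in> (\<lambda>f. restrict f {1..n}) ` Tn n"
    then obtain f where f: "f \<in> Tn n" "r = restrict f {1..n}" by blast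
    show "r \<in> {1..n} \<rightarrow>\<^sub>E {1..n}" unfolding f(2) restrict_PiE_iff using Tn_in[OF f(1)] by blast
  qed
  have "finite ({1..n} \<rightarrow>\<^sub>E {1..n::nat})" by (rule finite_PiE) auto
  hence "finite ((\<lambda>f. restrict f {1..n}) ` Tn n)" using sub by (rule finite_subset[rotated])
  thus ?thesis using inj by (rule finite_imageD)
qed

lemma funpow_period:
  fixes c :: "'a \<Rightarrow> 'a"
  assumes "c ^^ i = c ^^ j" "i < j"
  shows "c ^^ (i + x + t * (j - i)) = c ^^ (i + x)"
proof (induction t)
  case 0 then show ?case by simp
next
  case (Suc t)
  have e: "i + x + Suc t * (j - i) = (x + t * (j - i)) + j" using assms(2) by simp
  have e2: "(x + t * (j - i)) + i = i + x + t * (j - i)" by simp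
  have "c ^^ (i + x + Suc t * (j - i)) = c ^^ ((x + t * (j - i)) + j)" by (simp only: e)
  also have "\<dots> = c ^^ (x + t * (j - i)) \<circ> c ^^ j" by (rule funpow_add)
  also have "\<dots> = c ^^ (x + t * (j - i)) \<circ> c ^^ i" using assms(1) by simp
  also have "\<dots> = c ^^ ((x + t * (j - i)) + i)" by (rule funpow_add[symmetric])
  also have "\<dots> = c ^^ (i + x + t * (j - i))" by (simp only: e2)
  finally show ?case using Suc.IH by simp
qed

lemma idem_pow:
  assumes "c \<in> Tn n"
  shows "\<exists>m\<ge>1. c ^^ m \<circ> c ^^ m = c ^^ m"
proof -
  have "range (\<lambda>m::nat. c ^^ m) \<subseteq> Tn n" using pow_Tn[OF assms] by auto
  hence "finite (range (\<lambda>m::nat. c ^^ m))" using finite_Tn finite_subset by blast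
  hence "\<not> inj (\<lambda>m::nat. c ^^ m)" using finite_imageD infinite_UNIV_nat by blast
  then obtain i j :: nat where ij: "i \<noteq> j" "c ^^ i = c ^^ j" unfolding inj_def by blast
  obtain i j :: nat where ij: "i < j" "c ^^ i = c ^^ j"
  proof (cases "i < j")
    case True then show ?thesis using ij that by blast
  next
    case False then show ?thesis using ij that[of j i] by simp
  qed
  define m where "m = (i + 1) * (j - i)"
  have ji: "j - i \<ge> 1" using ij(1) by simp
  have "(i + 1) * 1 \<le> (i + 1) * (j - i)" by (rule mult_le_mono2[OF ji])
  hence m1: "m \<ge> 1" "m \<ge> i" by (simp_all add: m_def)
  have "c ^^ m \<circ> c ^^ m = c ^^ (i + (m - i) + (i + 1) * (j - i))"
    using m1 by (simp add: funpow_add[symmetric] m_def)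
  also have "\<dots> = c ^^ (i + (m - i))" by (rule funpow_period[OF ij(2,1)])
  also have "\<dots> = c ^^ m" using m1 by simp
  finally show ?thesis using m1 by blast
qed

lemma idem_gen:
  assumes c0: "c0 \<in> gen X" and X: "X \<subseteq> Tn n" and bT: "b \<in> Tn n" and bb: "b \<circ> b = b"
    and ker: "\<forall>z1\<in>{1..n}. \<forall>z2\<in>{1..n}. c0 z1 = c0 z2 \<longleftrightarrow> b z1 = b z2"
    and img: "c0 ` {1..n} = b ` {1..n}"
  shows "b \<in> gen X"
proof -
  define T where "T = b ` {1..n}"
  have c0T: "c0 \<in> Tn n" using gen_Tn[OF c0 X] .
  have TO: "T \<subseteq> {1..n}" using bT by (auto simp: T_def Tn_def)
  have bfix: "b t = t" if "t \<in> T" for t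
    using that bb unfolding T_def by (metis comp_apply image_iff)
  have "c0 ` T \<subseteq> T" using img TO unfolding T_def by blast
  moreover have "inj_on c0 T"
  proof (rule inj_onI)
    fix t1 t2 assume "t1 \<in> T" "t2 \<in> T" "c0 t1 = c0 t2"
    with ker TO bfix show "t1 = t2" by (metis subsetD)
  qed
  ultimately have c0TT: "c0 ` T = T" using TO finite_subset[OF TO]
    by (metis card_image card_subset_eq finite_atLeastAtMost)
  have powT: "(c0 ^^ m) ` T = T" for m
  proof (induction m)
    case (Suc m)
    have "(c0 ^^ Suc m) ` T = c0 ` ((c0 ^^ m) ` T)" by (simp add: image_image)
    thus ?case using Suc c0TT by simp
  qed simp
  obtain m where m: "m \<ge> 1" "c0 ^^ m \<circ> c0 ^^ m = c0 ^^ m" using idem_pow[OF c0T] by blast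
  define E where "E = c0 ^^ m"
  have Egen: "E \<in> gen X" using pow_gen[OF c0, of "m - 1"] m(1) by (simp add: E_def)
  have ET: "E \<in> Tn n" using pow_Tn[OF c0T] by (simp add: E_def)
  have Efix: "E t = t" if "t \<in> T" for t
  proof -
    from that powT[of m] obtain t' where "t' \<in> T" "t = E t'" unfolding E_def by blast
    thus ?thesis using m(2) unfolding E_def by (metis comp_apply)
  qed
  have Eker: "E z1 = E z2" if "c0 z1 = c0 z2" for z1 z2
  proof -
    have "E = c0 ^^ (m - 1) \<circ> c0" using m(1) unfolding E_def
      by (metis Suc_diff_le diff_Suc_1 funpow_Suc_right)
    thus ?thesis using that by simp
  qed
  have "E = b"
  proof
    fix z show "E z = b z"
    proof (cases "z \<in> {1..n}")
      case True
      have bz: "b z \<in> T" using True by (simp add: T_def)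
      have "b (b z) = b z" using bb by (metis comp_apply)
      hence "c0 (b z) = c0 z" using ker True bz TO by blast
      hence "E (b z) = E z" by (rule Eker)
      thus ?thesis using Efix[OF bz] by simp
    next
      case False
      thus ?thesis using ET bT by (simp add: Tn_out)
    qed
  qed
  thus ?thesis using Egen by simp
qed


lemma KC_image: "kernel_classes n f = (\<lambda>x. {y\<in>{1..n}. f y = f x}) ` {1..n}"
  unfolding kernel_classes_def by (rule Setcompr_eq_image)

lemma KC_sub: "C \<in> kernel_classes n f \<Longrightarrow> C \<subseteq> {1..n}"
  unfolding KC_image by auto

lemma KC_fin: "finite (kernel_classes n f)"
  unfolding KC_image by simp

lemma KC_disj: "C1 \<in> kernel_classes n f \<Longrightarrow> C2 \<in> kernel_classes n f \<Longrightarrow> C1 \<noteq> C2 \<Longrightarrow> C1 \<inter> C2 = {}"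
  unfolding KC_image by auto

lemma KC_Union: "\<Union>(kernel_classes n f) = {1..n}"
  unfolding KC_image by auto

lemma KC_perm:
  assumes p: "p permutes {1..n}"
  shows "(\<lambda>C. p ` C) ` kernel_classes n (f \<circ> p) = kernel_classes n f"
proof -
  have cl: "p ` {y\<in>{1..n}. (f \<circ> p) y = (f \<circ> p) x} = {z\<in>{1..n}. f z = f (p x)}" for x
  proof
    show "p ` {y\<in>{1..n}. (f \<circ> p) y = (f \<circ> p) x} \<subseteq> {z\<in>{1..n}. f z = f (p x)}"
      using permutes_in_image[OF p] by auto
    show "{z\<in>{1..n}. f z = f (p x)} \<subseteq> p ` {y\<in>{1..n}. (f \<circ> p) y = (f \<circ> p) x}"
    proof
      fix z assume z: "z \<in> {z\<in>{1..n}. f z = f (p x)}"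
      have "p (inv p z) = z" by (rule permutes_inverses(1)[OF p])
      moreover have "inv p z \<in> {1..n}" using z permutes_in_image[OF p, of "inv p z"] \<open>p (inv p z) = z\<close> by simp
      ultimately show "z \<in> p ` {y\<in>{1..n}. (f \<circ> p) y = (f \<circ> p) x}" using z
        by (metis (mono_tags, lifting) comp_apply image_eqI mem_Collect_eq)
    qed
  qed
  have "(\<lambda>C. p ` C) ` kernel_classes n (f \<circ> p) = (\<lambda>x. {z\<in>{1..n}. f z = f (p x)}) ` {1..n}"
    unfolding KC_image image_image cl ..
  also have "\<dots> = (\<lambda>z. {y\<in>{1..n}. f y = f z}) ` (p ` {1..n})"
    by (simp add: image_image)
  also have "\<dots> = kernel_classes n f" unfolding KC_image permutes_image[OF p] ..
  finally show ?thesis .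
qed

lemma KC_rel:
  assumes "kernel_classes n f1 = kernel_classes n f2" "x \<in> {1..n}" "y \<in> {1..n}"
  shows "f1 x = f1 y \<longleftrightarrow> f2 x = f2 y"
proof -
  have "{z\<in>{1..n}. f1 z = f1 x} \<in> kernel_classes n f1" unfolding KC_image using assms(2) by (rule imageI)
  hence "{z\<in>{1..n}. f1 z = f1 x} \<in> kernel_classes n f2" using assms(1) by simp
  hence "\<exists>w\<in>{1..n}. {z\<in>{1..n}. f1 z = f1 x} = {z\<in>{1..n}. f2 z = f2 w}" unfolding KC_image image_iff .
  then obtain w where w: "w \<in> {1..n}" "{z\<in>{1..n}. f1 z = f1 x} = {z\<in>{1..n}. f2 z = f2 w}"
    by (rule bexE)
  have "x \<in> {z\<in>{1..n}. f1 z = f1 x}" using assms(2) by simp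
  hence "x \<in> {z\<in>{1..n}. f2 z = f2 w}" unfolding w(2) .
  hence 1: "f2 x = f2 w" by simp
  have "y \<in> {z\<in>{1..n}. f1 z = f1 x} \<longleftrightarrow> y \<in> {z\<in>{1..n}. f2 z = f2 w}"
    by (simp only: w(2))
  hence 2: "f1 y = f1 x \<longleftrightarrow> f2 y = f2 w" using assms(3) by simp
  show ?thesis using 1 2 by (simp add: eq_commute)
qed

lemma rel_KC:
  assumes "\<forall>x\<in>{1..n}. \<forall>y\<in>{1..n}. f1 x = f1 y \<longleftrightarrow> f2 x = f2 y"
  shows "kernel_classes n f1 = kernel_classes n f2"
  unfolding KC_image
proof (rule image_cong[OF refl])
  fix x assume "x \<in> {1..n}"
  thus "{y\<in>{1..n}. f1 y = f1 x} = {y\<in>{1..n}. f2 y = f2 x}" using assms by auto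
qed

lemma inj_img_img:
  assumes "inj p" "(\<lambda>C. p ` C) ` X = (\<lambda>C. p ` C) ` Y"
  shows "X = Y"
proof -
  have "inj (\<lambda>C. p ` C)" by (rule injI) (simp add: inj_image_eq_iff[OF assms(1)])
  thus ?thesis using assms(2) by (simp add: inj_image_eq_iff)
qed

lemma img_img_comp: "(\<lambda>C. f ` C) ` ((\<lambda>C. g ` C) ` X) = (\<lambda>C. (f \<circ> g) ` C) ` X"
  by (simp add: image_image image_comp)

lemma inv_img:
  assumes "p permutes S"
  shows "(\<lambda>C. inv p ` C) ` ((\<lambda>C. p ` C) ` X) = X"
  unfolding img_img_comp permutes_inv_o(2)[OF assms] by simp

lemma mset_list_exists:
  "finite K \<Longrightarrow> image_mset f (mset_set K) = mset L \<Longrightarrow> \<exists>Ks. distinct Ks \<and> set Ks = K \<and> map f Ks = L"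
proof (induction L arbitrary: K)
  case Nil
  hence "mset_set K = {#}" by simp
  hence "K = {}" using Nil.prems(1) by (simp add: mset_set_empty_iff)
  thus ?case by (intro exI[of _ "[]"]) simp
next
  case (Cons l L)
  have "l \<in># image_mset f (mset_set K)" using Cons.prems(2) by simp
  hence "l \<in> f ` K" using Cons.prems(1) by simp
  then obtain x where x: "x \<in> K" "f x = l" by blast
  have "mset_set K = add_mset x (mset_set (K - {x}))" using Cons.prems(1) x(1) by (rule mset_set.remove)
  hence "image_mset f (mset_set (K - {x})) = mset L" using Cons.prems(2) x(2) by simp
  then obtain Ks where Ks: "distinct Ks" "set Ks = K - {x}" "map f Ks = L"
    using Cons.IH[of "K - {x}"] Cons.prems(1) by blast
  have "x \<notin> set Ks" using Ks(2) by simp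
  moreover have "set (x # Ks) = K" using Ks(2) x(1) by auto
  ultimately show ?case using Ks(1,3) x(2) by (intro exI[of _ "x # Ks"]) simp
qed

lemma Ks_exists: "\<exists>Ks. ordered_partition n (kernel_type n f) Ks \<and> set Ks = kernel_classes n f"
proof -
  have "mset (kernel_type n f) = image_mset card (mset_set (kernel_classes n f))"
    unfolding kernel_type_def by simp
  then obtain Ks where Ks: "distinct Ks" "set Ks = kernel_classes n f" "map card Ks = kernel_type n f"
    using mset_list_exists[OF KC_fin, of card n f "kernel_type n f"] by metis
  have "ordered_partition n (kernel_type n f) Ks"
    unfolding ordered_partition_def
  proof (intro conjI allI impI)
    show "length Ks = length (kernel_type n f)" using Ks(3) by (metis length_map)
    fix i assume i: "i < length Ks"
    show "card (Ks ! i) = kernel_type n f ! i" using nth_map[OF i, of card] Ks(3) by simp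
    have iK: "Ks ! i \<in> kernel_classes n f" using Ks(2) nth_mem[OF i] by simp
    show "Ks ! i \<subseteq> {1..n}" by (rule KC_sub[OF iK])
    fix j assume j: "j < length Ks" "i \<noteq> j"
    have jK: "Ks ! j \<in> kernel_classes n f" using Ks(2) nth_mem[OF j(1)] by simp
    have "Ks ! i \<noteq> Ks ! j" using nth_eq_iff_index_eq[OF Ks(1) i j(1)] j(2) by simp
    thus "Ks ! i \<inter> Ks ! j = {}" by (rule KC_disj[OF iK jK])
  next
    show "\<Union>(set Ks) = {1..n}" using Ks(2) KC_Union by simp
  qed
  thus ?thesis using Ks(2) by blast
qed

lemma op_map:
  assumes op: "ordered_partition n lam Ks" and p: "p permutes {1..n}"
  shows "ordered_partition n lam (map (\<lambda>C. p ` C) Ks)"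
  unfolding ordered_partition_def
proof (intro conjI allI impI)
  have inj: "inj p" using permutes_inj[OF p] .
  show "length (map (\<lambda>C. p ` C) Ks) = length lam" using op by (simp add: ordered_partition_def)
  fix i assume i: "i < length (map (\<lambda>C. p ` C) Ks)"
  hence i': "i < length Ks" by simp
  show "card (map (\<lambda>C. p ` C) Ks ! i) = lam ! i"
    using op i' card_image[OF inj_on_subset[OF inj subset_UNIV]] by (simp add: ordered_partition_def)
  have "Ks ! i \<subseteq> {1..n}" using op i' by (simp add: ordered_partition_def)
  hence "p ` (Ks ! i) \<subseteq> p ` {1..n}" by (rule image_mono)
  thus "map (\<lambda>C. p ` C) Ks ! i \<subseteq> {1..n}" using permutes_image[OF p] i' by simp
  fix j assume j: "j < length (map (\<lambda>C. p ` C) Ks)" "i \<noteq> j"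
  hence "Ks ! i \<inter> Ks ! j = {}" using op i' by (simp add: ordered_partition_def)
  thus "map (\<lambda>C. p ` C) Ks ! i \<inter> map (\<lambda>C. p ` C) Ks ! j = {}"
    using i' j image_Int[OF inj, of "Ks ! i" "Ks ! j"] by simp
next
  have "\<Union>(set Ks) = {1..n}" using op by (simp add: ordered_partition_def)
  hence "\<Union>(set (map (\<lambda>C. p ` C) Ks)) = p ` {1..n}" by auto
  thus "\<Union>(set (map (\<lambda>C. p ` C) Ks)) = {1..n}" using permutes_image[OF p] by simp
qed

lemma op_perm:
  assumes A: "ordered_partition n lam As" and B: "ordered_partition n lam Bs"
  shows "\<exists>\<sigma>. \<sigma> permutes {1..n} \<and> (\<lambda>C. \<sigma> ` C) ` set As = set Bs"
proof -
  have len: "length As = length Bs" using A B by (simp add: ordered_partition_def)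
  have c: "\<forall>i<length As. finite (As!i) \<and> finite (Bs!i) \<and> card (As!i) = card (Bs!i)"
    using A B unfolding ordered_partition_def by (metis finite_atLeastAtMost finite_subset)
  have d: "pdisj As" "pdisj Bs" using A B unfolding ordered_partition_def pdisj_def by auto
  obtain f where f: "bij_betw f (\<Union>(set As)) (\<Union>(set Bs))" "\<forall>i<length As. f ` (As!i) = Bs!i"
    using list_bij[OF len c d] by blast
  have U: "\<Union>(set As) = {1..n}" "\<Union>(set Bs) = {1..n}" using A B by (simp_all add: ordered_partition_def)
  obtain \<sigma> where s: "\<sigma> permutes {1..n}" "\<forall>x\<in>{1..n}. \<sigma> x = f x"
    using perm_ext[of "{1..n}" f "{1..n}" "{1..n}"] f(1) U by auto
  have si: "\<sigma> ` (As ! i) = Bs ! i" if "i < length As" for i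
  proof -
    have "As ! i \<subseteq> {1..n}" using A that by (simp add: ordered_partition_def)
    hence "\<sigma> ` (As ! i) = f ` (As ! i)" using s(2) by (intro image_cong) auto
    thus ?thesis using f(2) that by simp
  qed
  have "(\<lambda>C. \<sigma> ` C) ` set As = set Bs"
  proof
    show "(\<lambda>C. \<sigma> ` C) ` set As \<subseteq> set Bs"
    proof
      fix D assume "D \<in> (\<lambda>C. \<sigma> ` C) ` set As"
      then obtain C where C: "C \<in> set As" "D = \<sigma> ` C" by blast
      then obtain i where "i < length As" "C = As ! i" by (auto simp: in_set_conv_nth)
      thus "D \<in> set Bs" using si[of i] len C(2) nth_mem[of i Bs] by simp
    qed
    show "set Bs \<subseteq> (\<lambda>C. \<sigma> ` C) ` set As"
    proof
      fix D assume "D \<in> set Bs"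
      then obtain i where i: "i < length Bs" "D = Bs ! i" by (auto simp: in_set_conv_nth)
      have i2: "i < length As" using i(1) len by simp
      hence "\<sigma> ` (As!i) \<in> (\<lambda>C. \<sigma> ` C) ` set As" by simp
      thus "D \<in> (\<lambda>C. \<sigma> ` C) ` set As" using si[OF i2] i(2) by simp
    qed
  qed
  thus ?thesis using s(1) by blast
qed

lemma RC:
  assumes "finite S" "\<forall>x\<in>S. \<forall>y\<in>S. f1 x = f1 y \<longrightarrow> f2 x = f2 y" "card (f1 ` S) = card (f2 ` S)"
    "x \<in> S" "y \<in> S" "f2 x = f2 y"
  shows "f1 x = f1 y"
proof -
  define phi where "phi z = f2 (inv_into S f1 z)" for z
  have eq: "f2 z = phi (f1 z)" if "z \<in> S" for z
  proof -
    have "inv_into S f1 (f1 z) \<in> S" "f1 (inv_into S f1 (f1 z)) = f1 z"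
      using that by (auto intro: inv_into_into f_inv_into_f)
    thus ?thesis using assms(2) that unfolding phi_def by metis
  qed
  have "f2 ` S = (\<lambda>z. phi (f1 z)) ` S" by (rule image_cong[OF refl eq])
  also have "\<dots> = phi ` (f1 ` S)" by (simp only: image_image)
  finally have "card (phi ` (f1 ` S)) = card (f1 ` S)" using assms(3) by simp
  hence inj: "inj_on phi (f1 ` S)" by (rule eq_card_imp_inj_on[OF finite_imageI[OF assms(1)]])
  have "phi (f1 x) = phi (f1 y)" using eq[OF assms(4)] eq[OF assms(5)] assms(6) by simp
  thus ?thesis using inj_onD[OF inj] assms(4,5) by blast
qed


locale ctx =
  fixes n :: nat and a :: "nat \<Rightarrow> nat" and G :: "(nat \<Rightarrow> nat) set"
  assumes aT: "a \<in> Tn n" and aS: "a \<notin> Sn n" and sg: "is_subgroup_Sn n G"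

lemma (in ctx) GS: "G \<subseteq> Sn n"
  using sg by (simp add: is_subgroup_Sn_def)
lemma (in ctx) Gid: "id \<in> G"
  using sg by (simp add: is_subgroup_Sn_def)
lemma (in ctx) Gcomp: "g \<in> G \<Longrightarrow> h \<in> G \<Longrightarrow> g \<circ> h \<in> G"
  using sg by (simp add: is_subgroup_Sn_def)
lemma (in ctx) Ginv: "g \<in> G \<Longrightarrow> inv g \<in> G"
  using sg by (simp add: is_subgroup_Sn_def)
lemma (in ctx) Gperm: "g \<in> G \<Longrightarrow> g permutes {1..n}"
  using GS by (auto simp: Sn_def)
lemma (in ctx) GT: "insert a G \<subseteq> Tn n"
  using GS Sn_Tn aT by blast
lemma (in ctx) SnT: "insert a (Sn n) \<subseteq> Tn n"
  using Sn_Tn aT by blast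

lemma (in ctx) noninj: "\<not> inj_on a {1..n}"
proof
  assume inj: "inj_on a {1..n}"
  have sub: "a ` {1..n} \<subseteq> {1..n}" using Tn_in[OF aT] by blast
  have "card (a ` {1..n}) = card {1..n}" using card_image[OF inj] .
  hence "a ` {1..n} = {1..n}" using card_subset_eq[OF _ sub] by simp
  hence "bij_betw a {1..n} {1..n}" using inj by (simp add: bij_betw_def)
  hence "a permutes {1..n}" by (rule bij_imp_permutes) (simp add: Tn_out[OF aT])
  thus False using aS by (simp add: Sn_def)
qed

lemma (in ctx) rank_lt: "card (a ` {1..n}) < n"
proof -
  have "card (a ` {1..n}) \<le> card {1..n}" by (rule card_image_le) simp
  moreover have "card (a ` {1..n}) \<noteq> card {1..n}"
    using noninj eq_card_imp_inj_on[of "{1..n}" a] by auto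
  ultimately show ?thesis by simp
qed

definition (in ctx) RR where
  "RR f \<longleftrightarrow> (\<exists>g\<in>G. \<forall>x\<in>{1..n}. \<forall>y\<in>{1..n}. a (g x) = a (g y) \<longrightarrow> f x = f y)
      \<and> (\<exists>h\<in>G. f ` {1..n} \<subseteq> h ` a ` {1..n})"

lemma (in ctx) RR_I:
  "g \<in> G \<Longrightarrow> (\<And>x y. x \<in> {1..n} \<Longrightarrow> y \<in> {1..n} \<Longrightarrow> a (g x) = a (g y) \<Longrightarrow> f x = f y)
   \<Longrightarrow> h \<in> G \<Longrightarrow> f ` {1..n} \<subseteq> h ` a ` {1..n} \<Longrightarrow> RR f"
  unfolding RR_def by blast

lemma (in ctx) RR_E1:
  "RR f \<Longrightarrow> \<exists>g\<in>G. \<forall>x\<in>{1..n}. \<forall>y\<in>{1..n}. a (g x) = a (g y) \<longrightarrow> f x = f y"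
  unfolding RR_def by blast

lemma (in ctx) RR_E2:
  "RR f \<Longrightarrow> \<exists>h\<in>G. f ` {1..n} \<subseteq> h ` a ` {1..n}"
  unfolding RR_def by blast

lemma (in ctx) INV0:
  "f \<in> gen (insert a G) \<Longrightarrow> f \<in> G \<or> RR f"
proof (induction rule: gen.induct)
  case (base f)
  show ?case
  proof (cases "f = a")
    case True
    have "RR f" by (rule RR_I[OF Gid _ Gid]) (simp_all add: True)
    thus ?thesis by (rule disjI2)
  next
    case False thus ?thesis using base by simp
  qed
next
  case (comp f1 f2)
  have T2: "f2 \<in> Tn n" using gen_Tn[OF comp.hyps(2) GT] .
  have im: "(f1 \<circ> f2) ` {1..n} = f1 ` (f2 ` {1..n})" by (rule image_comp[symmetric])
  show ?case
  proof (cases "f1 \<in> G")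
    case g1: True
    show ?thesis
    proof (cases "f2 \<in> G")
      case True show ?thesis using Gcomp[OF g1 True] by (rule disjI1)
    next
      case False
      hence "RR f2" using comp.IH(2) by blast
      obtain g where gha: "g \<in> G" "\<forall>x\<in>{1..n}. \<forall>y\<in>{1..n}. a (g x) = a (g y) \<longrightarrow> f2 x = f2 y"
        using RR_E1[OF \<open>RR f2\<close>] by blast
      obtain h where ghb: "h \<in> G" "f2 ` {1..n} \<subseteq> h ` a ` {1..n}"
        using RR_E2[OF \<open>RR f2\<close>] by blast
      have I: "(f1 \<circ> f2) ` {1..n} \<subseteq> (f1 \<circ> h) ` a ` {1..n}"
      proof -
        have "f1 ` (f2 ` {1..n}) \<subseteq> f1 ` (h ` a ` {1..n})" by (rule image_mono[OF ghb(2)])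
        also have "\<dots> = (f1 \<circ> h) ` a ` {1..n}" by (rule image_comp)
        finally show ?thesis unfolding im .
      qed
      have "RR (f1 \<circ> f2)"
      proof (rule RR_I[OF gha(1) _ Gcomp[OF g1 ghb(1)] I])
        fix x y assume xy: "x \<in> {1..n}" "y \<in> {1..n}" "a (g x) = a (g y)"
        have "f2 x = f2 y" using gha(2) xy by blast
        thus "(f1 \<circ> f2) x = (f1 \<circ> f2) y" by simp
      qed
      thus ?thesis by (rule disjI2)
    qed
  next
    case ng1: False
    hence "RR f1" using comp.IH(1) by blast
    obtain g1 where gh1a: "g1 \<in> G" "\<forall>x\<in>{1..n}. \<forall>y\<in>{1..n}. a (g1 x) = a (g1 y) \<longrightarrow> f1 x = f1 y"
        using RR_E1[OF \<open>RR f1\<close>] by blast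
      obtain h1 where gh1b: "h1 \<in> G" "f1 ` {1..n} \<subseteq> h1 ` a ` {1..n}"
        using RR_E2[OF \<open>RR f1\<close>] by blast
    show ?thesis
    proof (cases "f2 \<in> G")
      case g2: True
      have p2: "f2 permutes {1..n}" using Gperm[OF g2] .
      have I: "(f1 \<circ> f2) ` {1..n} \<subseteq> h1 ` a ` {1..n}"
        unfolding im permutes_image[OF p2] by (rule gh1b(2))
      have "RR (f1 \<circ> f2)"
      proof (rule RR_I[OF Gcomp[OF gh1a(1) g2] _ gh1b(1) I])
        fix x y assume xy: "x \<in> {1..n}" "y \<in> {1..n}" "a ((g1 \<circ> f2) x) = a ((g1 \<circ> f2) y)"
        have "f2 x \<in> {1..n}" "f2 y \<in> {1..n}" using xy(1,2) permutes_in_image[OF p2] by blast+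
        moreover have "a (g1 (f2 x)) = a (g1 (f2 y))" using xy(3) by simp
        ultimately have "f1 (f2 x) = f1 (f2 y)" using gh1a(2) by blast
        thus "(f1 \<circ> f2) x = (f1 \<circ> f2) y" by simp
      qed
      thus ?thesis by (rule disjI2)
    next
      case False
      hence "RR f2" using comp.IH(2) by blast
      obtain g where gha: "g \<in> G" "\<forall>x\<in>{1..n}. \<forall>y\<in>{1..n}. a (g x) = a (g y) \<longrightarrow> f2 x = f2 y"
        using RR_E1[OF \<open>RR f2\<close>] by blast
      obtain h where ghb: "h \<in> G" "f2 ` {1..n} \<subseteq> h ` a ` {1..n}"
        using RR_E2[OF \<open>RR f2\<close>] by blast
      have I: "(f1 \<circ> f2) ` {1..n} \<subseteq> h1 ` a ` {1..n}"
      proof -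
        have "f1 ` (f2 ` {1..n}) \<subseteq> f1 ` {1..n}" using Tn_in[OF T2] by (intro image_mono) blast
        thus ?thesis unfolding im using gh1b(2) by (rule subset_trans)
      qed
      have "RR (f1 \<circ> f2)"
      proof (rule RR_I[OF gha(1) _ gh1b(1) I])
        fix x y assume xy: "x \<in> {1..n}" "y \<in> {1..n}" "a (g x) = a (g y)"
        have "f2 x = f2 y" using gha(2) xy by blast
        thus "(f1 \<circ> f2) x = (f1 \<circ> f2) y" by simp
      qed
      thus ?thesis by (rule disjI2)
    qed
  qed
qed

lemma (in ctx) INV:
  "f \<in> gen (insert a G) \<Longrightarrow> f \<in> G \<or> ((\<exists>g\<in>G. \<forall>x\<in>{1..n}. \<forall>y\<in>{1..n}. a (g x) = a (g y) \<longrightarrow> f x = f y)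
      \<and> (\<exists>h\<in>G. f ` {1..n} \<subseteq> h ` a ` {1..n}))"
  using INV0 unfolding RR_def .

lemma (in ctx) inv_img1: "g \<in> G \<Longrightarrow> inv g ` (g ` X) = X"
  using permutes_inv_o(2)[OF Gperm] by (simp add: image_comp)

lemma (in ctx) comp_notSn:
  assumes "\<sigma> permutes {1..n}" "\<tau> permutes {1..n}"
  shows "\<sigma> \<circ> a \<circ> \<tau> \<notin> Sn n"
proof
  assume "\<sigma> \<circ> a \<circ> \<tau> \<in> Sn n"
  hence "inj_on ((\<sigma> \<circ> a) \<circ> \<tau>) {1..n}" by (simp add: Sn_def permutes_inj_on)
  hence "inj_on (\<sigma> \<circ> a) (\<tau> ` {1..n})" by (rule inj_on_imageI)
  hence "inj_on (\<sigma> \<circ> a) {1..n}" using permutes_image[OF assms(2)] by simp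
  hence "inj_on a {1..n}" by (rule inj_on_imageI2)
  thus False using noninj by simp
qed

lemma (in ctx) comp_gen: "\<sigma> \<in> Sn n \<Longrightarrow> \<tau> \<in> Sn n \<Longrightarrow> \<sigma> \<circ> a \<circ> \<tau> \<in> gen (insert a (Sn n))"
  by (intro gen.comp gen.base) auto

lemma (in ctx) pair_elem:
  assumes "Sn_pair n a G" "\<sigma> permutes {1..n}" "\<tau> permutes {1..n}"
  shows "\<sigma> \<circ> a \<circ> \<tau> \<in> gen (insert a G) \<and> \<sigma> \<circ> a \<circ> \<tau> \<notin> G"
proof -
  have "\<sigma> \<circ> a \<circ> \<tau> \<in> gen (insert a (Sn n)) - Sn n"
    using comp_gen comp_notSn assms(2,3) by (simp add: Sn_def)
  thus ?thesis using assms(1) unfolding Sn_pair_def by blast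
qed

lemma (in ctx) fwd_img:
  assumes pair: "Sn_pair n a G" and A: "A \<subseteq> {1..n}" "card A = card (a ` {1..n})"
  shows "\<exists>h\<in>G. h ` a ` {1..n} = A"
proof -
  have fA: "finite A" using A(1) finite_subset by blast
  have aO: "a ` {1..n} \<subseteq> {1..n}" using Tn_in[OF aT] by blast
  obtain psi where psi: "bij_betw psi (a ` {1..n}) A"
    using finite_same_card_bij[of "a ` {1..n}" A] fA A(2) by auto
  obtain \<sigma> where s: "\<sigma> permutes {1..n}" "\<forall>x\<in>a ` {1..n}. \<sigma> x = psi x"
    using perm_ext[OF _ psi aO A(1)] by auto
  have b: "\<sigma> \<circ> a \<circ> id \<in> gen (insert a G)" "\<sigma> \<circ> a \<circ> id \<notin> G"
    using pair_elem[OF pair s(1) permutes_id] by blast+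
  from INV[OF b(1)] b(2) obtain h where h: "h \<in> G" "(\<sigma> \<circ> a \<circ> id) ` {1..n} \<subseteq> h ` a ` {1..n}" by blast
  have "(\<sigma> \<circ> a \<circ> id) ` {1..n} = \<sigma> ` (a ` {1..n})" by (simp add: image_comp)
  also have "\<dots> = psi ` (a ` {1..n})" using s(2) by (intro image_cong) auto
  also have "\<dots> = A" using psi by (simp add: bij_betw_def)
  finally have sub: "A \<subseteq> h ` a ` {1..n}" using h(2) by simp
  have "card (h ` a ` {1..n}) = card (a ` {1..n})"
    using card_image[OF permutes_inj_on[OF Gperm[OF h(1)]]] .
  hence "A = h ` a ` {1..n}" using card_subset_eq[OF _ sub] A(2) by simp
  thus ?thesis using h(1) by blast
qed

lemma (in ctx) fwd_k:
  assumes pair: "Sn_pair n a G"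
  shows "k_homogeneous n (card (a ` {1..n})) G"
  unfolding k_homogeneous_def
proof (intro allI impI)
  fix A B assume AB: "A \<subseteq> {1..n} \<and> B \<subseteq> {1..n} \<and> card A = card (a ` {1..n}) \<and> card B = card (a ` {1..n})"
  obtain hA where hA: "hA \<in> G" "hA ` a ` {1..n} = A" using fwd_img[OF pair] AB by blast
  obtain hB where hB: "hB \<in> G" "hB ` a ` {1..n} = B" using fwd_img[OF pair] AB by blast
  have "(hB \<circ> inv hA) ` A = hB ` (inv hA ` (hA ` a ` {1..n}))" using hA(2) by (simp add: image_comp)
  also have "\<dots> = B" using inv_img1[OF hA(1)] hB(2) by simp
  finally show "\<exists>g\<in>G. g ` A = B" using Gcomp[OF hB(1) Ginv[OF hA(1)]] by blast
qed

lemma (in ctx) fwd_part: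
  assumes pair: "Sn_pair n a G" and op: "ordered_partition n (kernel_type n a) As"
  shows "\<exists>g\<in>G. (\<lambda>C. g ` C) ` set As = kernel_classes n a"
proof -
  obtain Ks where Ks: "ordered_partition n (kernel_type n a) Ks" "set Ks = kernel_classes n a"
    using Ks_exists by blast
  obtain \<sigma> where s: "\<sigma> permutes {1..n}" "(\<lambda>C. \<sigma> ` C) ` set As = set Ks"
    using op_perm[OF op Ks(1)] by blast
  have "(\<lambda>C. \<sigma> ` C) ` set As = (\<lambda>C. \<sigma> ` C) ` kernel_classes n (a \<circ> \<sigma>)"
    using s(2) Ks(2) KC_perm[OF s(1), of a] by simp
  hence As: "set As = kernel_classes n (a \<circ> \<sigma>)" by (rule inj_img_img[OF permutes_inj[OF s(1)]])
  have b: "id \<circ> a \<circ> \<sigma> \<in> gen (insert a G)" "id \<circ> a \<circ> \<sigma> \<notin> G"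
    using pair_elem[OF pair permutes_id s(1)] by blast+
  from INV[OF b(1)] b(2) obtain g where g: "g \<in> G"
    "\<forall>x\<in>{1..n}. \<forall>y\<in>{1..n}. (a \<circ> g) x = (a \<circ> g) y \<longrightarrow> (a \<circ> \<sigma>) x = (a \<circ> \<sigma>) y" by auto
  have pg: "g permutes {1..n}" using Gperm[OF g(1)] .
  have "(a \<circ> g) ` {1..n} = (a \<circ> \<sigma>) ` {1..n}"
    unfolding image_comp[symmetric] permutes_image[OF pg] permutes_image[OF s(1)] ..
  hence "card ((a \<circ> g) ` {1..n}) = card ((a \<circ> \<sigma>) ` {1..n})" by simp
  hence "\<forall>x\<in>{1..n}. \<forall>y\<in>{1..n}. (a \<circ> g) x = (a \<circ> g) y \<longleftrightarrow> (a \<circ> \<sigma>) x = (a \<circ> \<sigma>) y"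
    using RC[of "{1..n}" "a \<circ> g" "a \<circ> \<sigma>"] g(2) by blast
  hence "kernel_classes n (a \<circ> g) = kernel_classes n (a \<circ> \<sigma>)" by (rule rel_KC)
  hence "(\<lambda>C. g ` C) ` set As = kernel_classes n a" using KC_perm[OF pg, of a] As by simp
  thus ?thesis using g(1) by blast
qed

lemma (in ctx) fwd_lam:
  assumes pair: "Sn_pair n a G"
  shows "lambda_homogeneous n (kernel_type n a) G"
  unfolding lambda_homogeneous_def
proof (intro allI impI)
  fix As Bs assume op: "ordered_partition n (kernel_type n a) As \<and> ordered_partition n (kernel_type n a) Bs"
  obtain gA where gA: "gA \<in> G" "(\<lambda>C. gA ` C) ` set As = kernel_classes n a" using fwd_part[OF pair] op by blast
  obtain gB where gB: "gB \<in> G" "(\<lambda>C. gB ` C) ` set Bs = kernel_classes n a" using fwd_part[OF pair] op by blast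
  have "(\<lambda>C. (inv gB \<circ> gA) ` C) ` set As = (\<lambda>C. inv gB ` C) ` ((\<lambda>C. gA ` C) ` set As)"
    by (simp only: img_img_comp)
  also have "\<dots> = (\<lambda>C. inv gB ` C) ` ((\<lambda>C. gB ` C) ` set Bs)" using gA(2) gB(2) by simp
  also have "\<dots> = set Bs" by (rule inv_img[OF Gperm[OF gB(1)]])
  finally show "\<exists>g\<in>G. (\<lambda>A. g ` A) ` set As = set Bs" using Gcomp[OF Ginv[OF gB(1)] gA(1)] by blast
qed

lemma (in ctx) bwd_sub: "gen (insert a G) - G \<subseteq> gen (insert a (Sn n)) - Sn n"
proof
  fix f assume f: "f \<in> gen (insert a G) - G"
  have "f \<in> gen (insert a (Sn n))" using f gen_mono[of f "insert a G" "insert a (Sn n)"] GS by blast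
  moreover have "f \<notin> Sn n"
  proof
    assume "f \<in> Sn n"
    hence img: "f ` {1..n} = {1..n}" by (simp add: Sn_def permutes_image)
    from INV f obtain h where h: "h \<in> G" "f ` {1..n} \<subseteq> h ` a ` {1..n}" by blast
    have "card (f ` {1..n}) \<le> card (h ` a ` {1..n})" using h(2) by (intro card_mono) auto
    also have "\<dots> \<le> card (a ` {1..n})" by (rule card_image_le) simp
    finally show False using img rank_lt by simp
  qed
  ultimately show "f \<in> gen (insert a (Sn n)) - Sn n" by blast
qed

lemma (in ctx) LH:
  assumes lh: "lambda_homogeneous n (kernel_type n a) G" and p: "\<pi> permutes {1..n}"
  shows "\<exists>g\<in>G. \<forall>x\<in>{1..n}. \<forall>y\<in>{1..n}. a (g x) = a (g y) \<longleftrightarrow> a (\<pi> x) = a (\<pi> y)"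
proof -
  obtain Ks where Ks: "ordered_partition n (kernel_type n a) Ks" "set Ks = kernel_classes n a"
    using Ks_exists by blast
  define As where "As = map (\<lambda>C. inv \<pi> ` C) Ks"
  have opA: "ordered_partition n (kernel_type n a) As"
    unfolding As_def by (rule op_map[OF Ks(1) permutes_inv[OF p]])
  obtain g where g: "g \<in> G" "(\<lambda>C. g ` C) ` set As = set Ks"
    using lh opA Ks(1) unfolding lambda_homogeneous_def by blast
  have pg: "g permutes {1..n}" using Gperm[OF g(1)] .
  have "kernel_classes n (a \<circ> \<pi>) = (\<lambda>C. inv \<pi> ` C) ` ((\<lambda>C. \<pi> ` C) ` kernel_classes n (a \<circ> \<pi>))"
    by (rule inv_img[OF p, symmetric])
  also have "\<dots> = set As" unfolding As_def using KC_perm[OF p, of a] Ks(2) by simp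
  finally have 1: "kernel_classes n (a \<circ> \<pi>) = set As" .
  have "(\<lambda>C. g ` C) ` kernel_classes n (a \<circ> g) = (\<lambda>C. g ` C) ` set As"
    using KC_perm[OF pg, of a] g(2) Ks(2) by simp
  hence "kernel_classes n (a \<circ> g) = set As" by (rule inj_img_img[OF permutes_inj[OF pg]])
  with 1 have "kernel_classes n (a \<circ> g) = kernel_classes n (a \<circ> \<pi>)" by simp
  hence "\<forall>x\<in>{1..n}. \<forall>y\<in>{1..n}. a (g x) = a (g y) \<longleftrightarrow> a (\<pi> x) = a (\<pi> y)"
    using KC_rel[of n "a \<circ> g" "a \<circ> \<pi>"] by simp
  thus ?thesis using g(1) by blast
qed


locale ctx2 = ctx +
  assumes kh: "k_homogeneous n (card (a ` {1..n})) G"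
    and lh: "lambda_homogeneous n (kernel_type n a) G"

lemma (in ctx2) kimg:
  assumes "T \<subseteq> {1..n}" "card T = card (a ` {1..n})"
  shows "\<exists>h\<in>G. h ` a ` {1..n} = T"
proof -
  have "a ` {1..n} \<subseteq> {1..n}" using Tn_in[OF aT] by blast
  thus ?thesis using kh[unfolded k_homogeneous_def, rule_format, of "a ` {1..n}" T] assms by blast
qed

lemma (in ctx2) idem_in:
  assumes bT: "b \<in> Tn n" and bb: "b \<circ> b = b" and p: "\<pi> permutes {1..n}"
    and ker: "\<forall>x\<in>{1..n}. \<forall>y\<in>{1..n}. b x = b y \<longleftrightarrow> a (\<pi> x) = a (\<pi> y)"
    and card: "card (b ` {1..n}) = card (a ` {1..n})"
  shows "b \<in> gen (insert a G)"
proof -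
  obtain g where g: "g \<in> G" "\<forall>x\<in>{1..n}. \<forall>y\<in>{1..n}. a (g x) = a (g y) \<longleftrightarrow> a (\<pi> x) = a (\<pi> y)"
    using LH[OF lh p] by blast
  have bO: "b ` {1..n} \<subseteq> {1..n}" using Tn_in[OF bT] by blast
  obtain h where h: "h \<in> G" "h ` a ` {1..n} = b ` {1..n}" using kimg[OF bO card] by blast
  define c0 where "c0 = h \<circ> a \<circ> g"
  have c0g: "c0 \<in> gen (insert a G)" unfolding c0_def
    by (intro gen.comp gen.base) (simp_all add: g(1) h(1))
  have hinj: "inj h" using permutes_inj[OF Gperm[OF h(1)]] .
  have ker0: "\<forall>z1\<in>{1..n}. \<forall>z2\<in>{1..n}. c0 z1 = c0 z2 \<longleftrightarrow> b z1 = b z2"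
  proof (intro ballI)
    fix z1 z2 assume z: "z1 \<in> {1..n}" "z2 \<in> {1..n}"
    have "c0 z1 = c0 z2 \<longleftrightarrow> a (g z1) = a (g z2)" unfolding c0_def using hinj by (simp add: inj_eq)
    also have "\<dots> \<longleftrightarrow> a (\<pi> z1) = a (\<pi> z2)" using g(2) z by blast
    also have "\<dots> \<longleftrightarrow> b z1 = b z2" using ker z by blast
    finally show "c0 z1 = c0 z2 \<longleftrightarrow> b z1 = b z2" .
  qed
  have img0: "c0 ` {1..n} = b ` {1..n}"
  proof -
    have "c0 ` {1..n} = h ` a ` (g ` {1..n})" unfolding c0_def by (simp add: image_comp o_assoc)
    also have "\<dots> = h ` a ` {1..n}" using permutes_image[OF Gperm[OF g(1)]] by simp
    finally show ?thesis using h(2) by simp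
  qed
  show ?thesis by (rule idem_gen[OF c0g GT bT bb ker0 img0])
qed

lemma (in ctx2) move:
  assumes c: "c \<in> gen (insert a G)" and ck: "card (c ` {1..n}) = card (a ` {1..n})"
    and x: "x \<in> c ` {1..n}" and y: "y \<in> {1..n}" "y \<notin> c ` {1..n}"
  shows "Transposition.transpose x y \<circ> c \<in> gen (insert a G)"
proof -
  define I where "I = c ` {1..n}"
  have cT: "c \<in> Tn n" using gen_Tn[OF c GT] .
  have IO: "I \<subseteq> {1..n}" unfolding I_def using Tn_in[OF cT] by blast
  have fI: "finite I" using IO finite_subset by blast
  define k where "k = card (a ` {1..n})"
  have cI: "card I = k" using ck by (simp add: I_def k_def)
  have xI: "x \<in> I" using x by (simp add: I_def)
  have yI: "y \<notin> I" using y by (simp add: I_def)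
  have xO: "x \<in> {1..n}" using xI IO by blast
  have xy: "x \<noteq> y" using xI yI by blast
  obtain u v where uv: "u \<in> {1..n}" "v \<in> {1..n}" "u \<noteq> v" "a u = a v"
    using noninj unfolding inj_on_def by blast
  define s where "s w = (if w = a u then u else (SOME z. z \<in> {1..n} \<and> a z = w))" for w
  have sprop: "s w \<in> {1..n} \<and> a (s w) = w" if "w \<in> a ` {1..n}" for w
  proof (cases "w = a u")
    case True thus ?thesis using uv(1) by (simp add: s_def)
  next
    case False
    from that obtain z where "z \<in> {1..n}" "a z = w" by blast
    hence "\<exists>z. z \<in> {1..n} \<and> a z = w" by blast
    hence "(SOME z. z \<in> {1..n} \<and> a z = w) \<in> {1..n} \<and> a (SOME z. z \<in> {1..n} \<and> a z = w) = w"
      by (rule someI_ex)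
    thus ?thesis using False by (simp add: s_def)
  qed
  define R where "R = s ` (a ` {1..n})"
  have RO: "R \<subseteq> {1..n}" unfolding R_def using sprop by blast
  have aR: "a ` R = a ` {1..n}"
  proof
    show "a ` R \<subseteq> a ` {1..n}" using RO by blast
    show "a ` {1..n} \<subseteq> a ` R"
    proof
      fix w assume w: "w \<in> a ` {1..n}"
      have "w = a (s w)" using sprop[OF w] by simp
      moreover have "s w \<in> R" unfolding R_def using w by blast
      ultimately show "w \<in> a ` R" by blast
    qed
  qed
  have injR: "inj_on a R"
  proof (rule inj_onI)
    fix r1 r2 assume r: "r1 \<in> R" "r2 \<in> R" "a r1 = a r2"
    then obtain w1 w2 where w: "w1 \<in> a ` {1..n}" "r1 = s w1" "w2 \<in> a ` {1..n}" "r2 = s w2"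
      unfolding R_def by blast
    have "w1 = w2" using sprop[OF w(1)] sprop[OF w(3)] r(3) w(2,4) by simp
    thus "r1 = r2" using w(2,4) by simp
  qed
  have fR: "finite R" using RO finite_subset by blast
  have cR: "card R = k" using card_image[OF injR] aR by (simp add: k_def)
  have uR: "u \<in> R"
  proof -
    have "a u \<in> a ` {1..n}" using uv(1) by blast
    moreover have "u = s (a u)" by (simp add: s_def)
    ultimately show ?thesis unfolding R_def by (rule rev_image_eqI)
  qed
  have vR: "v \<notin> R"
  proof
    assume "v \<in> R"
    then obtain w where w: "w \<in> a ` {1..n}" "v = s w" unfolding R_def by blast
    show False
    proof (cases "w = a u")
      case True thus False using w(2) uv(3) by (simp add: s_def)
    next
      case False
      have "a v = w" using sprop[OF w(1)] w(2) by simp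
      thus False using False uv(4) by simp
    qed
  qed
  have "card (I - {x}) = card (R - {u})" using cI cR xI uR fI fR by simp
  then obtain h0 where h0: "bij_betw h0 (I - {x}) (R - {u})"
    using finite_same_card_bij[of "I - {x}" "R - {u}"] fI fR by auto
  have b1: "bij_betw (\<lambda>z. if z = x then u else v) {x, y} {u, v}"
  proof (rule bij_betw_imageI)
    show "inj_on (\<lambda>z. if z = x then u else v) {x, y}"
    proof (rule inj_onI)
      fix z1 z2 assume "z1 \<in> {x, y}" "z2 \<in> {x, y}" "(if z1 = x then u else v) = (if z2 = x then u else v)"
      thus "z1 = z2" using uv(3) by (auto split: if_splits)
    qed
    show "(\<lambda>z. if z = x then u else v) ` {x, y} = {u, v}" using xy by auto
  qed
  define f where "f z = (if z \<in> {x, y} then (if z = x then u else v) else h0 z)" for z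
  have fD: "bij_betw f ({x, y} \<union> (I - {x})) ({u, v} \<union> (R - {u}))"
  proof -
    have d1: "{x, y} \<inter> (I - {x}) = {}" using yI by blast
    have d2: "{u, v} \<inter> (R - {u}) = {}" using vR by blast
    show ?thesis unfolding f_def by (rule bij_betw_disjoint_Un[OF b1 h0 d1 d2])
  qed
  have DO: "{x, y} \<union> (I - {x}) \<subseteq> {1..n}" using xO y(1) IO by auto
  have EO: "{u, v} \<union> (R - {u}) \<subseteq> {1..n}" using uv(1,2) RO by auto
  obtain \<pi> where pi: "\<pi> permutes {1..n}" "\<forall>z\<in>{x, y} \<union> (I - {x}). \<pi> z = f z"
    using perm_ext[OF _ fD DO EO] by auto
  have pix: "\<pi> x = u" using pi(2) by (simp add: f_def)
  have piy: "\<pi> y = v" using pi(2) xy by (simp add: f_def)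
  have piI: "\<pi> z = h0 z" if "z \<in> I - {x}" for z
  proof -
    have "z \<noteq> y" using that yI by blast
    thus ?thesis using pi(2) that by (simp add: f_def)
  qed
  define T where "T = insert y (I - {x})"
  have TO: "T \<subseteq> {1..n}" using y(1) IO by (auto simp: T_def)
  define R' where "R' = insert v (R - {u})"
  have piT: "\<pi> ` T = R'"
  proof -
    have "\<pi> ` (I - {x}) = h0 ` (I - {x})" by (rule image_cong[OF refl piI])
    also have "\<dots> = R - {u}" using h0 by (simp add: bij_betw_def)
    finally show ?thesis by (simp add: T_def R'_def piy)
  qed
  have injR': "inj_on a R'"
  proof -
    have "inj_on a (R - {u})" using injR by (rule inj_on_subset) blast
    moreover have "a v \<notin> a ` ((R - {u}) - {v})"
    proof
      assume "a v \<in> a ` ((R - {u}) - {v})"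
      then obtain r where r: "r \<in> R" "r \<noteq> u" "a v = a r" by blast
      have "a u = a r" using r(3) uv(4) by simp
      hence "u = r" using injR uR r(1) by (simp add: inj_on_eq_iff)
      thus False using r(2) by simp
    qed
    ultimately show ?thesis by (simp add: R'_def)
  qed
  have aR': "a ` R' = a ` {1..n}"
  proof -
    have "a ` R' = insert (a v) (a ` (R - {u}))" by (simp add: R'_def)
    also have "\<dots> = a ` (insert u (R - {u}))" by (simp only: image_insert uv(4))
    also have "\<dots> = a ` R" using uR by (simp only: insert_Diff)
    finally show ?thesis using aR by simp
  qed
  define F where "F = a \<circ> \<pi>"
  have injF: "inj_on F T" unfolding F_def
    by (rule comp_inj_on[OF permutes_inj_on[OF pi(1)]]) (simp add: piT injR')
  have FT: "F ` T = a ` {1..n}" unfolding F_def image_comp[symmetric] piT by (rule aR')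
  have FO: "F z \<in> F ` T" if "z \<in> {1..n}" for z
  proof -
    have "\<pi> z \<in> {1..n}" using that permutes_in_image[OF pi(1)] by simp
    thus ?thesis unfolding FT by (simp add: F_def)
  qed
  define b where "b z = (if z \<in> {1..n} then inv_into T F (F z) else z)" for z
  have bT: "b z \<in> T" if "z \<in> {1..n}" for z
    using that FO[OF that] by (simp add: b_def inv_into_into)
  have bfix: "b t = t" if "t \<in> T" for t
  proof -
    have "t \<in> {1..n}" using that TO by blast
    thus ?thesis using inv_into_f_f[OF injF that] by (simp add: b_def)
  qed
  have bout: "b z = z" if "z \<notin> {1..n}" for z
    unfolding b_def by (rule if_not_P[OF that])
  have bTn: "b \<in> Tn n" unfolding Tn_def using bT TO bout by blast
  have bb: "b \<circ> b = b"
  proof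
    fix z show "(b \<circ> b) z = b z"
    proof (cases "z \<in> {1..n}")
      case True thus ?thesis using bfix[OF bT[OF True]] by simp
    next
      case False
      hence "b z = z" by (rule bout)
      thus ?thesis by simp
    qed
  qed
  have bker: "\<forall>z1\<in>{1..n}. \<forall>z2\<in>{1..n}. b z1 = b z2 \<longleftrightarrow> a (\<pi> z1) = a (\<pi> z2)"
  proof (intro ballI iffI)
    fix z1 z2 assume z: "z1 \<in> {1..n}" "z2 \<in> {1..n}"
    { assume "b z1 = b z2"
      hence "F (inv_into T F (F z1)) = F (inv_into T F (F z2))" using z by (simp add: b_def)
      hence "F z1 = F z2" using f_inv_into_f[OF FO[OF z(1)]] f_inv_into_f[OF FO[OF z(2)]] by simp
      thus "a (\<pi> z1) = a (\<pi> z2)" by (simp add: F_def) }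
    { assume "a (\<pi> z1) = a (\<pi> z2)"
      hence "F z1 = F z2" by (simp add: F_def)
      thus "b z1 = b z2" using z by (simp add: b_def) }
  qed
  have bimg: "b ` {1..n} = T"
  proof
    show "b ` {1..n} \<subseteq> T" using bT by blast
    show "T \<subseteq> b ` {1..n}"
    proof
      fix t assume t: "t \<in> T"
      hence "t = b t" using bfix by simp
      thus "t \<in> b ` {1..n}" using t TO by blast
    qed
  qed
  have bcard: "card (b ` {1..n}) = card (a ` {1..n})"
    using card_image[OF injF] FT bimg by simp
  have bgen: "b \<in> gen (insert a G)" by (rule idem_in[OF bTn bb pi(1) bker bcard])
  have yT: "y \<in> T" by (simp add: T_def)
  have "b \<circ> c = Transposition.transpose x y \<circ> c"
  proof
    fix z show "(b \<circ> c) z = (Transposition.transpose x y \<circ> c) z"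
    proof (cases "z \<in> {1..n}")
      case zO: True
      have cz: "c z \<in> I" using zO by (simp add: I_def)
      show ?thesis
      proof (cases "c z = x")
        case True
        have "F x = F y" by (simp add: F_def pix piy uv(4))
        hence "b x = b y" using xO y(1) by (simp add: b_def)
        also have "\<dots> = y" by (rule bfix[OF yT])
        finally show ?thesis using True by simp
      next
        case False
        have "c z \<in> T" using cz False by (simp add: T_def)
        hence "b (c z) = c z" by (rule bfix)
        moreover have "c z \<noteq> y" using cz yI by blast
        ultimately show ?thesis using False by simp
      qed
    next
      case False
      have "c z = z" using Tn_out[OF cT False] .
      moreover have "z \<noteq> x" "z \<noteq> y" using False xO y(1) by blast+
      ultimately show ?thesis using bout[OF False] by simp
    qed
  qed
  thus ?thesis using gen.comp[OF bgen c] by simp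
qed


lemma (in ctx2) tcomp_img:
  "(Transposition.transpose p q \<circ> d) ` {1..n} = Transposition.transpose p q ` (d ` {1..n})"
  by (rule image_comp[symmetric])

lemma (in ctx2) tcomp_card:
  "card ((Transposition.transpose p q \<circ> d) ` {1..n}) = card (d ` {1..n})"
  unfolding tcomp_img by (rule card_image[OF inj_on_transpose])

lemma (in ctx2) tswap:
  assumes c: "c \<in> gen (insert a G)" and ck: "card (c ` {1..n}) = card (a ` {1..n})"
    and x: "x \<in> {1..n}" and y: "y \<in> {1..n}"
  shows "Transposition.transpose x y \<circ> c \<in> gen (insert a G)"
proof -
  define I where "I = c ` {1..n}"
  have cT: "c \<in> Tn n" using gen_Tn[OF c GT] .
  have IO: "I \<subseteq> {1..n}" unfolding I_def using Tn_in[OF cT] by blast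
  show ?thesis
  proof (cases "x \<in> I")
    case xI: True
    show ?thesis
    proof (cases "y \<in> I")
      case yI: True
      show ?thesis
      proof (cases "x = y")
        case True thus ?thesis using c by simp
      next
        case xy: False
        have "card I < card {1..n::nat}" using ck rank_lt by (simp add: I_def)
        hence "I \<noteq> {1..n}" by auto
        then obtain j where j: "j \<in> {1..n}" "j \<notin> I" using IO by blast
        have jx: "j \<noteq> x" "j \<noteq> y" using j xI yI by blast+
        define c1 where "c1 = Transposition.transpose x j \<circ> c"
        have c1g: "c1 \<in> gen (insert a G)" unfolding c1_def
          by (rule move[OF c ck]) (use xI j in \<open>simp_all add: I_def\<close>)
        have ck1: "card (c1 ` {1..n}) = card (a ` {1..n})" unfolding c1_def tcomp_card by (rule ck)
        have img1: "c1 ` {1..n} = Transposition.transpose x j ` I" unfolding c1_def tcomp_img I_def ..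
        have y1: "y \<in> c1 ` {1..n}" unfolding img1 in_transpose_image_iff using yI xy jx by simp
        have x1: "x \<notin> c1 ` {1..n}" unfolding img1 in_transpose_image_iff using j by simp
        define c2 where "c2 = Transposition.transpose y x \<circ> c1"
        have c2g: "c2 \<in> gen (insert a G)" unfolding c2_def by (rule move[OF c1g ck1 y1 x x1])
        have ck2: "card (c2 ` {1..n}) = card (a ` {1..n})" unfolding c2_def tcomp_card by (rule ck1)
        have img2: "c2 ` {1..n} = Transposition.transpose y x ` (c1 ` {1..n})" unfolding c2_def tcomp_img ..
        have j2: "j \<in> c2 ` {1..n}" unfolding img2 in_transpose_image_iff img1 using jx xI by simp
        have y2: "y \<notin> c2 ` {1..n}" unfolding img2 in_transpose_image_iff using x1 by simp
        have c3g: "Transposition.transpose j y \<circ> c2 \<in> gen (insert a G)" by (rule move[OF c2g ck2 j2 y y2])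
        have "Transposition.transpose j y \<circ> Transposition.transpose y x \<circ> Transposition.transpose x j
              = Transposition.transpose x y"
          using xy jx by (auto simp: fun_eq_iff Transposition.transpose_def)
        hence "Transposition.transpose j y \<circ> c2 = Transposition.transpose x y \<circ> c"
          unfolding c2_def c1_def by (metis comp_assoc)
        thus ?thesis using c3g by simp
      qed
    next
      case False
      show ?thesis by (rule move[OF c ck]) (use xI False y in \<open>simp_all add: I_def\<close>)
    qed
  next
    case xI: False
    show ?thesis
    proof (cases "y \<in> I")
      case True
      have "Transposition.transpose y x \<circ> c \<in> gen (insert a G)"
        by (rule move[OF c ck]) (use xI True x in \<open>simp_all add: I_def\<close>)
      thus ?thesis by (simp add: transpose_commute)
    next
      case yI: False
      have "Transposition.transpose x y \<circ> c = c"
      proof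
        fix z show "(Transposition.transpose x y \<circ> c) z = c z"
        proof (cases "z \<in> {1..n}")
          case True
          hence "c z \<in> I" by (simp add: I_def)
          hence "c z \<noteq> x" "c z \<noteq> y" using xI yI by blast+
          thus ?thesis by simp
        next
          case False
          hence "c z = z" using Tn_out[OF cT] by simp
          moreover have "z \<noteq> x" "z \<noteq> y" using False x y by blast+
          ultimately show ?thesis by simp
        qed
      qed
      thus ?thesis using c by simp
    qed
  qed
qed

lemma (in ctx2) perm_left:
  assumes p: "\<sigma> permutes {1..n}" and c: "c \<in> gen (insert a G)" and ck: "card (c ` {1..n}) = card (a ` {1..n})"
  shows "\<sigma> \<circ> c \<in> gen (insert a G)"
  using p finite_atLeastAtMost
proof (induction rule: permutes_induct)
  case id then show ?case using c by simp
next
  case (swap x1 x2 p)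
  have "card ((p \<circ> c) ` {1..n}) = card (c ` {1..n})"
    unfolding image_comp[symmetric] by (rule card_image[OF permutes_inj_on[OF \<open>p permutes {1..n}\<close>]])
  hence ck2: "card ((p \<circ> c) ` {1..n}) = card (a ` {1..n})" using ck by simp
  have "Transposition.transpose x1 x2 \<circ> (p \<circ> c) \<in> gen (insert a G)"
    by (rule tswap[OF \<open>p \<circ> c \<in> gen (insert a G)\<close> ck2 \<open>x1 \<in> {1..n}\<close> \<open>x2 \<in> {1..n}\<close>])
  thus ?case by (simp only: comp_assoc)
qed

lemma (in ctx2) key:
  assumes s: "\<sigma> permutes {1..n}" and t: "\<tau> permutes {1..n}"
  shows "\<sigma> \<circ> a \<circ> \<tau> \<in> gen (insert a G)"
proof -
  obtain g where g: "g \<in> G" "\<forall>x\<in>{1..n}. \<forall>y\<in>{1..n}. a (g x) = a (g y) \<longleftrightarrow> a (\<tau> x) = a (\<tau> y)"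
    using LH[OF lh t] by blast
  define c where "c = a \<circ> g"
  have cg: "c \<in> gen (insert a G)" unfolding c_def by (intro gen.comp gen.base) (simp_all add: g(1))
  have cT: "c \<in> Tn n" using gen_Tn[OF cg GT] .
  define t' where "t' = \<sigma> \<circ> a \<circ> \<tau>"
  have tT: "t' \<in> Tn n" unfolding t'_def
    using Sn_Tn s t aT by (intro Tn_comp) (auto simp: Sn_def)
  have sinj: "inj \<sigma>" using permutes_inj[OF s] .
  have ker: "t' z1 = t' z2 \<longleftrightarrow> c z1 = c z2" if "z1 \<in> {1..n}" "z2 \<in> {1..n}" for z1 z2
  proof -
    have "t' z1 = t' z2 \<longleftrightarrow> a (\<tau> z1) = a (\<tau> z2)" unfolding t'_def using sinj by (simp add: inj_eq)
    also have "\<dots> \<longleftrightarrow> a (g z1) = a (g z2)" using g(2) that by blast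
    finally show ?thesis by (simp add: c_def)
  qed
  define psi where "psi w = t' (inv_into {1..n} c w)" for w
  have psic: "psi (c z) = t' z" if "z \<in> {1..n}" for z
  proof -
    have "c z \<in> c ` {1..n}" using that by blast
    hence "inv_into {1..n} c (c z) \<in> {1..n}" "c (inv_into {1..n} c (c z)) = c z"
      by (rule inv_into_into, rule f_inv_into_f)
    thus ?thesis using ker[OF _ that] by (simp add: psi_def)
  qed
  have bij: "bij_betw psi (c ` {1..n}) (t' ` {1..n})"
  proof (rule bij_betw_imageI)
    show "inj_on psi (c ` {1..n})"
    proof (rule inj_onI)
      fix w1 w2 assume w: "w1 \<in> c ` {1..n}" "w2 \<in> c ` {1..n}" "psi w1 = psi w2"
      then obtain z1 z2 where z: "z1 \<in> {1..n}" "w1 = c z1" "z2 \<in> {1..n}" "w2 = c z2" by blast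
      have "t' z1 = t' z2" using w(3) psic z by simp
      thus "w1 = w2" using ker z by simp
    qed
    have "psi ` (c ` {1..n}) = (\<lambda>z. psi (c z)) ` {1..n}" by (simp add: image_image)
    also have "\<dots> = t' ` {1..n}" by (rule image_cong[OF refl psic])
    finally show "psi ` (c ` {1..n}) = t' ` {1..n}" .
  qed
  have cO: "c ` {1..n} \<subseteq> {1..n}" using Tn_in[OF cT] by blast
  have tO: "t' ` {1..n} \<subseteq> {1..n}" using Tn_in[OF tT] by blast
  obtain \<pi> where pi: "\<pi> permutes {1..n}" "\<forall>w\<in>c ` {1..n}. \<pi> w = psi w"
    using perm_ext[OF _ bij cO tO] by auto
  have eq: "t' = \<pi> \<circ> c"
  proof
    fix z show "t' z = (\<pi> \<circ> c) z"
    proof (cases "z \<in> {1..n}")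
      case True
      thus ?thesis using pi(2) psic[OF True] by simp
    next
      case False
      have "t' z = z" "c z = z" using Tn_out[OF tT False] Tn_out[OF cT False] .
      moreover have "\<pi> z = z" using permutes_not_in[OF pi(1) False] .
      ultimately show ?thesis by simp
    qed
  qed
  have ck: "card (c ` {1..n}) = card (a ` {1..n})"
    unfolding c_def image_comp[symmetric] permutes_image[OF Gperm[OF g(1)]] ..
  have "\<pi> \<circ> c \<in> gen (insert a G)" by (rule perm_left[OF pi(1) cg ck])
  thus ?thesis using eq by (simp add: t'_def)
qed

lemma (in ctx2) good:
  "f \<in> gen (insert a (Sn n)) \<Longrightarrow> f \<in> Sn n \<or> (\<forall>\<sigma>\<in>Sn n. \<forall>\<tau>\<in>Sn n. \<sigma> \<circ> f \<circ> \<tau> \<in> gen (insert a G))"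
proof (induction rule: gen.induct)
  case (base f)
  show ?case
  proof (cases "f = a")
    case True
    have "\<forall>\<sigma>\<in>Sn n. \<forall>\<tau>\<in>Sn n. \<sigma> \<circ> f \<circ> \<tau> \<in> gen (insert a G)"
      using key True by (simp add: Sn_def)
    thus ?thesis by (rule disjI2)
  next
    case False thus ?thesis using base by simp
  qed
next
  case (comp f1 f2)
  have idS: "id \<in> Sn n" by (simp add: Sn_def)
  show ?case
  proof (cases "f1 \<in> Sn n")
    case s1: True
    show ?thesis
    proof (cases "f2 \<in> Sn n")
      case True
      have "f1 \<circ> f2 permutes {1..n}" using s1 True permutes_compose by (auto simp: Sn_def)
      hence "f1 \<circ> f2 \<in> Sn n" by (simp only: Sn_def mem_Collect_eq)
      thus ?thesis by (rule disjI1)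
    next
      case False
      hence G2: "\<forall>\<sigma>\<in>Sn n. \<forall>\<tau>\<in>Sn n. \<sigma> \<circ> f2 \<circ> \<tau> \<in> gen (insert a G)" using comp.IH(2) by blast
      have "\<forall>\<sigma>\<in>Sn n. \<forall>\<tau>\<in>Sn n. \<sigma> \<circ> (f1 \<circ> f2) \<circ> \<tau> \<in> gen (insert a G)"
      proof (intro ballI)
        fix \<sigma> \<tau> assume st: "\<sigma> \<in> Sn n" "\<tau> \<in> Sn n"
        have "\<sigma> \<circ> f1 \<in> Sn n" using st(1) s1 permutes_compose by (auto simp: Sn_def)
        hence "(\<sigma> \<circ> f1) \<circ> f2 \<circ> \<tau> \<in> gen (insert a G)" using G2 st(2) by blast
        thus "\<sigma> \<circ> (f1 \<circ> f2) \<circ> \<tau> \<in> gen (insert a G)" by (simp add: comp_assoc)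
      qed
      thus ?thesis by (rule disjI2)
    qed
  next
    case False
    hence G1: "\<forall>\<sigma>\<in>Sn n. \<forall>\<tau>\<in>Sn n. \<sigma> \<circ> f1 \<circ> \<tau> \<in> gen (insert a G)" using comp.IH(1) by blast
    show ?thesis
    proof (cases "f2 \<in> Sn n")
      case s2: True
      have "\<forall>\<sigma>\<in>Sn n. \<forall>\<tau>\<in>Sn n. \<sigma> \<circ> (f1 \<circ> f2) \<circ> \<tau> \<in> gen (insert a G)"
      proof (intro ballI)
        fix \<sigma> \<tau> assume st: "\<sigma> \<in> Sn n" "\<tau> \<in> Sn n"
        have "f2 \<circ> \<tau> \<in> Sn n" using st(2) s2 permutes_compose by (auto simp: Sn_def)
        hence "\<sigma> \<circ> f1 \<circ> (f2 \<circ> \<tau>) \<in> gen (insert a G)" using G1 st(1) by blast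
        thus "\<sigma> \<circ> (f1 \<circ> f2) \<circ> \<tau> \<in> gen (insert a G)" by (simp add: comp_assoc)
      qed
      thus ?thesis by (rule disjI2)
    next
      case False
      hence G2: "\<forall>\<sigma>\<in>Sn n. \<forall>\<tau>\<in>Sn n. \<sigma> \<circ> f2 \<circ> \<tau> \<in> gen (insert a G)" using comp.IH(2) by blast
      have "\<forall>\<sigma>\<in>Sn n. \<forall>\<tau>\<in>Sn n. \<sigma> \<circ> (f1 \<circ> f2) \<circ> \<tau> \<in> gen (insert a G)"
      proof (intro ballI)
        fix \<sigma> \<tau> assume st: "\<sigma> \<in> Sn n" "\<tau> \<in> Sn n"
        have "\<sigma> \<circ> f1 \<circ> id \<in> gen (insert a G)" using G1 st(1) idS by blast
        moreover have "id \<circ> f2 \<circ> \<tau> \<in> gen (insert a G)" using G2 st(2) idS by blast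
        ultimately have "(\<sigma> \<circ> f1 \<circ> id) \<circ> (id \<circ> f2 \<circ> \<tau>) \<in> gen (insert a G)" by (rule gen.comp)
        thus "\<sigma> \<circ> (f1 \<circ> f2) \<circ> \<tau> \<in> gen (insert a G)" by (simp add: comp_assoc)
      qed
      thus ?thesis by (rule disjI2)
    qed
  qed
qed

lemma (in ctx2) bwd_sup: "gen (insert a (Sn n)) - Sn n \<subseteq> gen (insert a G) - G"
proof
  fix f assume f: "f \<in> gen (insert a (Sn n)) - Sn n"
  have idS: "id \<in> Sn n" by (simp add: Sn_def)
  have "id \<circ> f \<circ> id \<in> gen (insert a G)" using good f idS by blast
  moreover have "f \<notin> G" using f GS by blast
  ultimately show "f \<in> gen (insert a G) - G" by simp
qed

theorem theorem5p3:
  fixes n k :: nat and a :: "nat \<Rightarrow> nat" and G :: "(nat \<Rightarrow> nat) set" and lam :: "nat list"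
  assumes "a \<in> Tn n - Sn n"
    and "rank n a = k"
    and "kernel_type n a = lam"
    and "is_subgroup_Sn n G"
  shows "Sn_pair n a G \<longleftrightarrow> k_homogeneous n k G \<and> lambda_homogeneous n lam G"
proof -
  have C: "ctx n a G" by (rule ctx.intro) (use assms(1,4) in auto)
  have k: "k = card (a ` {1..n})" using assms(2) by (simp add: rank_def)
  have lam: "lam = kernel_type n a" using assms(3) by simp
  show ?thesis
  proof
    assume P: "Sn_pair n a G"
    show "k_homogeneous n k G \<and> lambda_homogeneous n lam G"
      using ctx.fwd_k[OF C P] ctx.fwd_lam[OF C P] k lam by simp
  next
    assume H: "k_homogeneous n k G \<and> lambda_homogeneous n lam G"
    have C2: "ctx2 n a G"
      by (rule ctx2.intro[OF C], rule ctx2_axioms.intro) (use H k lam in simp_all)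
    show "Sn_pair n a G" unfolding Sn_pair_def
      using ctx.bwd_sub[OF C] ctx2.bwd_sup[OF C2] by blast
  qed
qed

end
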